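(* Assume the setting and hypotheses of the context (assumptions (A1)–(A3) on the kernel and (I1)–(I2) on deterministic initial conditions $\boldsymbol{\pi}^{(N)}$ for some $\varepsilon>0$). Let $(\rho_k)_{k\in\mathbb{N}_0}$ be a strictly decreasing sequence in $(0,1)$ with $\rho_k\downarrow\rho>0$ and $\rho_k-\rho_{k+1}=f_k$ (after rescaling $(f_k)$ if necessary), and define the stopping times $$\mathcal{T}_k:=\inf\Big\{t>0:\ \langle m\mathbf{1}_{m\ge2^i},\bar{\mathbf{L}}^{(N)}_t\rangle/\langle m\mathbf{1}_{m\ge1},\boldsymbol{\pi}^{(N)}\rangle\ge\rho_i\ \text{for } i=0,1,\dots,k\Big\}.$$ Then for all sufficiently large $N$ and every $k\le\log_2(\psi(N))$, $\mathbb{E}^{N,\boldsymbol{\pi}^{(N)}}[\mathcal{T}_k]<\infty$.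
   Context: $(E,\mathcal{B})$ measurable space, $m:E\to(0,\infty)$ mass function, $K$ coagulation kernel: measurable in $(x,y)$, a measure in the last argument, symmetric, $\bar K(x,y):=K(x,y,E)<\infty$, $m(z)=m(x)+m(y)$ for $K(x,y,\cdot)$-a.e. $z$. Process $\mathbf{L}^{(N)}_t$ on finite point measures: each pair of clusters of types $x,y$ merges at exponential rate $\bar K(x,y)$ into one of type $z\sim K(x,y,\cdot)/\bar K(x,y)$; $\bar{\mathbf{L}}^{(N)}_t:=\mathbf{L}^{(N)}_{t/N}/N$ started at $\bar{\mathbf{L}}^{(N)}_0=\boldsymbol{\pi}^{(N)}$; $\langle f,\mu\rangle=\int f\mathrm d\mu$; $\mathbb{E}^{N,\boldsymbol{\pi}^{(N)}}$ the corresponding expectation. Assumptions, with $\xi:\mathbb{N}\to\mathbb{N}$ and $\psi$ non-decreasing, $\psi(N)\to\infty$: (A1) partitions $\mathscr{P}^{(j)}$ of $E$, $|\mathscr{P}^{(j)}|\le\xi(N)$, with $c'(P,j):=\inf\{\bar K(x,y):2^j\le m(x),m(y)<2^{j+1},x,y\in P\}>0$ for all $P\in\mathscr{P}^{(j)}$; (A2) a strictly decreasing summable positive sequence $(f_j)_{j\ge0}$ with $\limsup_N\sum_{j=0}^{\log_2\psi(N)}\frac{2^j}{f_j^2}\sum_{P\in\mathscr{P}^{(j)}}c'(P,j)^{-1}<\infty$; (A3) $\psi(N)\xi(N)/N\to0$. (I1) $\langle m\mathbf{1}_{m\ge1},\boldsymbol{\pi}^{(N)}\rangle>\varepsilon$,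 $\boldsymbol{\pi}^{(N)}(E)<\infty$; (I2) some $g_{\boldsymbol{\pi}^{(N)}}<\infty$ with $\int\bar{\mathbf{L}}^{(N)}_s(\mathrm dx)\bar{\mathbf{L}}^{(N)}_s(\mathrm dy)\bar K(x,y)m(x)\le g_{\boldsymbol{\pi}^{(N)}}$ for all $s\ge0$. *)

theory Defs
  imports "HOL-Probability.Probability" "HOL-Library.Multiset"
begin

text \<open>
  The type space is a measurable space M (points of type 'a, E = space M).
  A finite point measure on E (a configuration of clusters, one Dirac mass per cluster)
  is represented by a multiset of types.  The unscaled Marcus--Lushnikov process L^(N)
  lives on multisets; the rescaled process is  Lbar_t = L_(t/N) / N, so integrals against
  rescaled measures carry a factor 1/N (see pairing), and in rescaled time every pair of
  clusters of types x, y merges at rate Kbar(x,y)/N.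
\<close>

definition pairing :: "nat \<Rightarrow> ('a \<Rightarrow> real) \<Rightarrow> 'a multiset \<Rightarrow> real" where
  "pairing N f L = (\<Sum>x\<in>#L. f x) / real N"

definition Kbar :: "('a \<Rightarrow> 'a \<Rightarrow> 'a measure) \<Rightarrow> 'a \<Rightarrow> 'a \<Rightarrow> real" where
  "Kbar K x y = measure (K x y) (space (K x y))"

text \<open>Weight of the ordered type pair (x,y) in configuration L, normalised so that summing
  over all ordered type pairs gives the sum of Kbar over all unordered pairs of distinct
  clusters: for x \<noteq> y there are count x * count y cluster pairs (each ordered type pair
  gets half of it), for x = y there are (count x choose 2) cluster pairs.\<close>
definition pair_weight :: "('a \<Rightarrow> 'a \<Rightarrow> 'a measure) \<Rightarrow> 'a multiset \<Rightarrow> 'a \<times> 'a \<Rightarrow> real" where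
  "pair_weight K L p = (case p of (x, y) \<Rightarrow>
     (if x = y then real (count L x choose 2) * Kbar K x x
      else real (count L x) * real (count L y) * Kbar K x y / 2))"

definition total_rate :: "('a \<Rightarrow> 'a \<Rightarrow> 'a measure) \<Rightarrow> 'a multiset \<Rightarrow> real" where
  "total_rate K L = (\<Sum>p\<in>set_mset L \<times> set_mset L. pair_weight K L p)"

definition pair_choice :: "('a \<Rightarrow> 'a \<Rightarrow> 'a measure) \<Rightarrow> 'a multiset \<Rightarrow> ('a \<times> 'a) measure" where
  "pair_choice K L = density (count_space UNIV) (\<lambda>p. ennreal (pair_weight K L p / total_rate K L))"

definition merge_law :: "('a \<Rightarrow> 'a \<Rightarrow> 'a measure) \<Rightarrow> 'a \<Rightarrow> 'a \<Rightarrow> 'a measure" where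
  "merge_law K x y = scale_measure (ennreal (1 / Kbar K x y)) (K x y)"

definition holding_law :: "nat \<Rightarrow> ('a \<Rightarrow> 'a \<Rightarrow> 'a measure) \<Rightarrow> 'a multiset \<Rightarrow> real measure" where
  "holding_law N K L = density lborel (exponential_density (total_rate K L / real N))"

text \<open>
  hit_aux N K C n L: law (a measure on [0,\<infinity>]) of the hitting time
  inf {t > 0. C (state at rescaled time t)} of the rescaled coagulation process started in
  configuration L, built from the standard jump-chain / exponential-holding-time description
  of the Markov jump process: if C holds now the time is 0; if no jump is possible
  (total rate 0) the state is frozen forever and the time is \<infinity>; otherwise wait an
  Exp(total_rate/N) time, merge a pair (x,y) chosen with probability proportional to its
  rate into a cluster of type z ~ K(x,y,.)/Kbar(x,y), and continue.  Since each jump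
  reduces the number of clusters by one, n = size L steps of recursion suffice (with fewer
  than two clusters no jump is possible).
\<close>
fun hit_aux :: "nat \<Rightarrow> ('a \<Rightarrow> 'a \<Rightarrow> 'a measure) \<Rightarrow> ('a multiset \<Rightarrow> bool) \<Rightarrow> nat \<Rightarrow> 'a multiset
    \<Rightarrow> ennreal measure" where
  "hit_aux N K C 0 L = return borel (if C L then 0 else \<infinity>)"
| "hit_aux N K C (Suc n) L =
     (if C L then return borel 0
      else if total_rate K L = 0 then return borel \<infinity>
      else Giry_Monad.bind (holding_law N K L) (\<lambda>\<tau>.
             Giry_Monad.bind
               (Giry_Monad.bind (pair_choice K L) (\<lambda>(x, y).
                  Giry_Monad.bind (merge_law K x y) (\<lambda>z.
                    hit_aux N K C n (L - {#x, y#} + {#z#}))))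
               (\<lambda>t. return borel (ennreal \<tau> + t))))"

definition hit_law :: "nat \<Rightarrow> ('a \<Rightarrow> 'a \<Rightarrow> 'a measure) \<Rightarrow> ('a multiset \<Rightarrow> bool) \<Rightarrow> 'a multiset
    \<Rightarrow> ennreal measure" where
  "hit_law N K C L = hit_aux N K C (size L) L"

definition expected_hitting_time ::
    "nat \<Rightarrow> ('a \<Rightarrow> 'a \<Rightarrow> 'a measure) \<Rightarrow> ('a multiset \<Rightarrow> bool) \<Rightarrow> 'a multiset \<Rightarrow> ennreal" where
  "expected_hitting_time N K C L = (\<integral>\<^sup>+ t. t \<partial>hit_law N K C L)"

text \<open>
  always_AE K P n L: almost surely every configuration visited by the process started in L
  satisfies P.  (Every configuration of the jump chain is occupied for a positive amount of
  time, and the process is constant between jumps, so this is the same as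
  "almost surely P(L_s) for all s \<ge> 0".)
\<close>
fun always_AE :: "('a \<Rightarrow> 'a \<Rightarrow> 'a measure) \<Rightarrow> ('a multiset \<Rightarrow> bool) \<Rightarrow> nat \<Rightarrow> 'a multiset \<Rightarrow> bool" where
  "always_AE K P 0 L = P L"
| "always_AE K P (Suc n) L =
     (P L \<and> (\<forall>x y. pair_weight K L (x, y) > 0 \<longrightarrow>
        (AE z in K x y. always_AE K P n (L - {#x, y#} + {#z#}))))"

definition always_visited :: "('a \<Rightarrow> 'a \<Rightarrow> 'a measure) \<Rightarrow> ('a multiset \<Rightarrow> bool) \<Rightarrow> 'a multiset \<Rightarrow> bool" where
  "always_visited K P L = always_AE K P (size L) L"

definition c_prime :: "('a \<Rightarrow> 'a \<Rightarrow> 'a measure) \<Rightarrow> ('a \<Rightarrow> real) \<Rightarrow> 'a set \<Rightarrow> nat \<Rightarrow> ennreal" where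
  "c_prime K m P j = Inf {ennreal (Kbar K x y) | x y. x \<in> P \<and> y \<in> P \<and>
      2 ^ j \<le> m x \<and> m x < 2 ^ (j + 1) \<and> 2 ^ j \<le> m y \<and> m y < 2 ^ (j + 1)}"

definition is_partition :: "'a set \<Rightarrow> 'a set set \<Rightarrow> bool" where
  "is_partition E \<P> \<longleftrightarrow> \<Union>\<P> = E \<and> {} \<notin> \<P> \<and> disjoint \<P>"

definition stop_cond :: "nat \<Rightarrow> ('a \<Rightarrow> real) \<Rightarrow> (nat \<Rightarrow> real) \<Rightarrow> 'a multiset \<Rightarrow> nat
    \<Rightarrow> 'a multiset \<Rightarrow> bool" where
  "stop_cond N m \<rho> L0 k L \<longleftrightarrow> (\<forall>i\<le>k.
     pairing N (\<lambda>x. if m x \<ge> 2 ^ i then m x else 0) L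
       / pairing N (\<lambda>x. if m x \<ge> 1 then m x else 0) L0 \<ge> \<rho> i)"

end

theory Submission
  imports Defs
begin


definition Good :: "ennreal measure \<Rightarrow> ennreal \<Rightarrow> bool" where
  "Good \<mu> B \<longleftrightarrow> (sets \<mu> = sets (borel::ennreal measure) \<longrightarrow>
      emeasure \<mu> (space \<mu>) \<le> 1 \<and> (\<integral>\<^sup>+t. t \<partial>\<mu>) \<le> B)"

definition Str :: "ennreal measure \<Rightarrow> bool" where
  "Str \<mu> \<longleftrightarrow> sets \<mu> = sets (borel::ennreal measure) \<or> space \<mu> = {}"

lemma sets_borel_ne: "sets (borel::ennreal measure) \<noteq> {{}}"
proof
  assume "sets (borel::ennreal measure) = {{}}"
  moreover have "UNIV \<in> sets (borel::ennreal measure)" by simp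
  ultimately show False by auto
qed

lemma sets_bind_some:
  assumes "space M \<noteq> {}"
  shows "sets (bind M g) = sets (g (SOME x. x \<in> space M))"
  using assms by (simp add: bind_nonempty)

lemma Str_bind:
  assumes "space M \<noteq> {} \<Longrightarrow> Str (g (SOME x. x \<in> space M))"
  shows "Str (bind M g)"
proof (cases "space M = {}")
  case True then show ?thesis by (simp add: bind_empty Str_def)
next
  case False
  then have "sets (bind M g) = sets (g (SOME x. x \<in> space M))" by (rule sets_bind_some)
  with assms False show ?thesis unfolding Str_def
    by (metis sets_eq_imp_space_eq)
qed

lemma emeasure_distr_le:
  "emeasure (distr M N g) A \<le> emeasure M (g -` A \<inter> space M)"
  unfolding distr_def emeasure_measure_of_conv by auto

lemma Good_bind:
  fixes M :: "'b measure" and g :: "'b \<Rightarrow> ennreal measure"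
  assumes M1: "emeasure M (space M) \<le> 1"
    and AEg: "AE x in M. Good (g x) B"
  shows "Good (bind M g) B"
  unfolding Good_def
proof
  assume sb: "sets (bind M g) = sets (borel::ennreal measure)"
  have ne: "space M \<noteq> {}"
  proof
    assume "space M = {}"
    then have "sets (bind M g) = {{}}" by (simp add: bind_empty)
    with sb sets_borel_ne show False by simp
  qed
  define x0 where "x0 = (SOME x. x \<in> space M)"
  have sg0: "sets (g x0) = sets (borel::ennreal measure)"
    using sb sets_bind_some[OF ne, of g] by (simp add: x0_def)
  define SB where "SB = subprob_algebra (borel::ennreal measure)"
  have SBeq: "subprob_algebra (g x0) = SB" unfolding SB_def by (rule subprob_algebra_cong[OF sg0])
  define D where "D = distr M SB g"
  have bj: "bind M g = join D"
    using ne SBeq by (simp add: bind_nonempty D_def x0_def)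
  have sD: "sets D = sets SB" by (simp add: D_def)
  have spD: "space D = space SB" by (simp add: D_def)
  have Dle: "\<And>A. emeasure D A \<le> emeasure M (g -` A \<inter> space M)"
    unfolding D_def by (rule emeasure_distr_le)
  have Dsp: "emeasure D (space D) \<le> 1"
    by (rule order_trans[OF Dle]) (rule order_trans[OF emeasure_space M1])
  obtain N0 where N0: "N0 \<in> null_sets M" "{x\<in>space M. \<not> Good (g x) B} \<subseteq> N0"
    using AEg unfolding eventually_ae_filter by auto
  define F where "F = (\<lambda>M'::ennreal measure. \<integral>\<^sup>+t. t \<partial>M')"
  have Fm: "F \<in> borel_measurable SB"
    unfolding F_def SB_def by (rule nn_integral_measurable_subprob_algebra) simp
  define Abad where "Abad = {M'\<in>space SB. B < F M'}"
  have Abad_sets: "Abad \<in> sets SB"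
  proof -
    have "Abad = F -` {B<..} \<inter> space SB" by (auto simp: Abad_def)
    then show ?thesis using measurable_sets[OF Fm, of "{B<..}"] by simp
  qed
  have "g -` Abad \<inter> space M \<subseteq> N0"
  proof
    fix x assume x: "x \<in> g -` Abad \<inter> space M"
    then have "g x \<in> space SB" "B < F (g x)" by (auto simp: Abad_def)
    then have "sets (g x) = sets (borel::ennreal measure)"
      by (simp add: SB_def space_subprob_algebra)
    with \<open>B < F (g x)\<close> have "\<not> Good (g x) B" by (auto simp: Good_def F_def)
    with x N0 show "x \<in> N0" by auto
  qed
  then have "emeasure M (g -` Abad \<inter> space M) = 0"
    using N0 by (metis emeasure_mono le_zero_eq null_setsD1 null_setsD2)
  then have DAbad: "emeasure D Abad = 0" using Dle[of Abad] by simp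
  have AEF: "AE M' in D. F M' \<le> B"
    by (rule AE_I[OF _ DAbad]) (use Abad_sets in \<open>auto simp: Abad_def spD sD not_le\<close>)
  have "(\<integral>\<^sup>+t. t \<partial>join D) = (\<integral>\<^sup>+M'. F M' \<partial>D)"
    unfolding F_def by (rule nn_integral_join) (auto simp: sD SB_def)
  also have "\<dots> \<le> (\<integral>\<^sup>+M'. B \<partial>D)"
    by (rule nn_integral_mono_AE[OF AEF])
  also have "\<dots> = B * emeasure D (space D)" by simp
  also have "\<dots> \<le> B" using Dsp by (metis mult.right_neutral mult_left_mono zero_le)
  finally have I: "(\<integral>\<^sup>+t. t \<partial>join D) \<le> B" .
  have "emeasure (join D) (space (join D)) = emeasure (join D) (space (borel::ennreal measure))"
    using sb bj by (metis sets_eq_imp_space_eq)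
  also have "\<dots> = (\<integral>\<^sup>+M'. emeasure M' (space (borel::ennreal measure)) \<partial>D)"
    by (rule emeasure_join) (auto simp: sD SB_def)
  also have "\<dots> \<le> (\<integral>\<^sup>+M'. 1 \<partial>D)"
  proof (rule nn_integral_mono)
    fix M' assume "M' \<in> space D"
    then have "subprob_space M'" "sets M' = sets (borel::ennreal measure)"
      by (auto simp: spD SB_def space_subprob_algebra)
    then show "emeasure M' (space (borel::ennreal measure)) \<le> 1"
      by (metis sets_eq_imp_space_eq subprob_space.emeasure_space_le_1)
  qed
  also have "\<dots> \<le> 1" using Dsp by simp
  finally show "emeasure (bind M g) (space (bind M g)) \<le> 1 \<and> (\<integral>\<^sup>+t. t \<partial>bind M g) \<le> B"
    using I bj by simp
qed



lemma Good_outer: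
  fixes R :: "ennreal measure" and r :: real
  assumes Rs: "Str R" and RG: "Good R B" and r: "0 < r"
  shows "Good (bind (density lborel (exponential_density r))
            (\<lambda>\<tau>. bind R (\<lambda>t. return borel (ennreal \<tau> + t)))) (ennreal (1/r) + B)"
proof (cases "space R = {}")
  case True
  then have "(\<lambda>\<tau>::real. bind R (\<lambda>t. return borel (ennreal \<tau> + t))) = (\<lambda>_. count_space {})"
    by (simp add: bind_empty)
  moreover have "space (density lborel (exponential_density r)) \<noteq> {}" by simp
  ultimately show ?thesis
    using sets_borel_ne by (simp add: Good_def bind_nonempty)
next
  case False
  define H where "H = density lborel (exponential_density r)"
  have sR: "sets R = sets (borel::ennreal measure)" using Rs False by (simp add: Str_def)
  have R1: "emeasure R (space R) \<le> 1" and RB: "(\<integral>\<^sup>+t. t \<partial>R) \<le> B"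
    using RG sR by (auto simp: Good_def)
  have Rsub: "subprob_space R" using R1 False by (intro subprob_spaceI) auto
  define SB where "SB = subprob_algebra (borel::ennreal measure)"
  have RSB: "R \<in> space SB" using Rsub sR by (simp add: SB_def space_subprob_algebra)
  have sH: "sets H = sets (lborel::real measure)" by (simp add: H_def)
  have pm: "(\<lambda>x. ennreal (fst x) + snd x) \<in> borel_measurable (H \<Otimes>\<^sub>M (borel::ennreal measure))"
    unfolding measurable_cong_sets[OF sets_pair_measure_cong[OF sH refl] refl] by measurable
  have ret: "(\<lambda>x. return borel (ennreal (fst x) + snd x)) \<in> measurable (H \<Otimes>\<^sub>M (borel::ennreal measure)) SB"
    unfolding SB_def by (rule measurable_compose[OF pm return_measurable])
  have gm: "(\<lambda>\<tau>. bind R (\<lambda>t. return borel (ennreal \<tau> + t))) \<in> measurable H SB"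
    unfolding SB_def by (rule measurable_bind[OF measurable_const[OF RSB[unfolded SB_def]] ret[unfolded SB_def]])
  have inner: "(\<integral>\<^sup>+u. u \<partial>bind R (\<lambda>t. return borel (ennreal \<tau> + t))) \<le> ennreal \<tau> + B" for \<tau> :: real
  proof -
    have rm: "(\<lambda>t. return borel (ennreal \<tau> + t)) \<in> measurable R SB"
      unfolding SB_def measurable_cong_sets[OF sR refl] by measurable
    have "(\<integral>\<^sup>+u. u \<partial>bind R (\<lambda>t. return borel (ennreal \<tau> + t)))
        = (\<integral>\<^sup>+t. (\<integral>\<^sup>+u. u \<partial>return borel (ennreal \<tau> + t)) \<partial>R)"
      by (rule nn_integral_bind[OF _ rm[unfolded SB_def]]) simp
    also have "\<dots> = (\<integral>\<^sup>+t. ennreal \<tau> + t \<partial>R)"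
      by (intro nn_integral_cong) (simp add: nn_integral_return)
    also have "\<dots> = (\<integral>\<^sup>+t. ennreal \<tau> \<partial>R) + (\<integral>\<^sup>+t. t \<partial>R)"
      by (rule nn_integral_add) (auto simp: measurable_cong_sets[OF sR refl])
    also have "\<dots> \<le> ennreal \<tau> + B"
    proof (rule add_mono)
      have "(\<integral>\<^sup>+t. ennreal \<tau> \<partial>R) = ennreal \<tau> * emeasure R (space R)" by simp
      also have "\<dots> \<le> ennreal \<tau> * 1" using R1 by (intro mult_left_mono) auto
      finally show "(\<integral>\<^sup>+t. ennreal \<tau> \<partial>R) \<le> ennreal \<tau>" by simp
    qed (rule RB)
    finally show ?thesis .
  qed
  have Hprob: "prob_space H" unfolding H_def by (rule prob_space_exponential_density[OF r])
  have Hmean: "(\<integral>\<^sup>+\<tau>. ennreal \<tau> \<partial>H) = ennreal (1/r)"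
  proof -
    have "(\<integral>\<^sup>+\<tau>. ennreal \<tau> \<partial>H) = (\<integral>\<^sup>+\<tau>. ennreal (exponential_density r \<tau>) * ennreal \<tau> \<partial>lborel)"
      unfolding H_def by (rule nn_integral_density) (auto simp: exponential_density_nonneg[OF r])
    also have "\<dots> = (\<integral>\<^sup>+\<tau>. ennreal (exponential_density r \<tau> * \<tau> ^ 1) \<partial>lborel)"
      using r by (intro nn_integral_cong) (auto simp: exponential_density_def ennreal_mult'[symmetric] ennreal_neg)
    also have "\<dots> = ennreal (1/r)"
      using nn_integral_erlang_ith_moment[OF r, of 0 1] by simp
    finally show ?thesis .
  qed
  have "(\<integral>\<^sup>+u. u \<partial>bind H (\<lambda>\<tau>. bind R (\<lambda>t. return borel (ennreal \<tau> + t))))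
      = (\<integral>\<^sup>+\<tau>. (\<integral>\<^sup>+u. u \<partial>bind R (\<lambda>t. return borel (ennreal \<tau> + t))) \<partial>H)"
    by (rule nn_integral_bind[OF _ gm[unfolded SB_def]]) simp
  also have "\<dots> \<le> (\<integral>\<^sup>+\<tau>. ennreal \<tau> + B \<partial>H)"
    by (intro nn_integral_mono inner)
  also have "\<dots> = (\<integral>\<^sup>+\<tau>. ennreal \<tau> \<partial>H) + (\<integral>\<^sup>+\<tau>. B \<partial>H)"
    by (rule nn_integral_add) (auto simp: H_def)
  also have "\<dots> = ennreal (1/r) + B"
    using Hmean prob_space.emeasure_space_1[OF Hprob] by simp
  finally have I: "(\<integral>\<^sup>+u. u \<partial>bind H (\<lambda>\<tau>. bind R (\<lambda>t. return borel (ennreal \<tau> + t)))) \<le> ennreal (1/r) + B" .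
  have sb: "sets (bind H (\<lambda>\<tau>. bind R (\<lambda>t. return borel (ennreal \<tau> + t)))) = sets (borel::ennreal measure)"
  proof -
    have "\<And>\<tau>. sets (bind R (\<lambda>t. return borel (ennreal \<tau> + t))) = sets (borel::ennreal measure)"
      by (rule sets_bind) (use False in auto)
    note * = this
    show ?thesis by (rule sets_bind) (auto simp: H_def *)
  qed
  have "emeasure (bind H (\<lambda>\<tau>. bind R (\<lambda>t. return borel (ennreal \<tau> + t))))
          (space (bind H (\<lambda>\<tau>. bind R (\<lambda>t. return borel (ennreal \<tau> + t))))) \<le> 1"
  proof -
    have "subprob_space (bind H (\<lambda>\<tau>. bind R (\<lambda>t. return borel (ennreal \<tau> + t))))"
      by (rule subprob_space_bind[OF _ gm[unfolded SB_def]])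
         (use Hprob in \<open>simp add: prob_space_imp_subprob_space\<close>)
    then show ?thesis by (rule subprob_space.emeasure_space_le_1)
  qed
  with I show ?thesis unfolding H_def Good_def by simp
qed



lemma Kbar_nonneg: "0 \<le> Kbar K x y"
  by (simp add: Kbar_def)

lemma pair_weight_nonneg: "0 \<le> pair_weight K L p"
  by (auto simp: pair_weight_def Kbar_nonneg split: prod.splits)

lemma pair_weight_pos_D:
  assumes "pair_weight K L (x, y) > 0"
  shows "{#x, y#} \<subseteq># L" "Kbar K x y > 0"
proof -
  show "Kbar K x y > 0"
  proof (rule ccontr)
    assume "\<not> Kbar K x y > 0"
    then have "Kbar K x y = 0" using Kbar_nonneg[of K x y] by simp
    then have "pair_weight K L (x, y) = 0" by (cases "x = y") (simp_all add: pair_weight_def)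
    with assms show False by simp
  qed
  show "{#x, y#} \<subseteq># L"
  proof (cases "x = y")
    case True
    have "pair_weight K L (x, y) = real (count L x choose 2) * Kbar K x x"
      using True by (simp add: pair_weight_def)
    with assms have "count L x choose 2 \<noteq> 0" by (metis mult_zero_left of_nat_0 less_irrefl)
    then have "count L x \<ge> 2" by (metis binomial_eq_0 not_le)
    with True show ?thesis by (simp add: subseteq_mset_def)
  next
    case False
    have "pair_weight K L (x, y) = real (count L x) * real (count L y) * Kbar K x y / 2"
      using False by (simp add: pair_weight_def)
    with assms have "count L x \<noteq> 0" "count L y \<noteq> 0" by (metis mult_zero_left mult_zero_right of_nat_0 div_0 less_irrefl)+
    with False show ?thesis
      by (simp add: subseteq_mset_def) (metis One_nat_def Suc_leI neq0_conv)
  qed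
qed

lemma pair_weight_outside:
  assumes "p \<notin> set_mset L \<times> set_mset L"
  shows "pair_weight K L p = 0"
proof -
  obtain x y where p: "p = (x, y)" by force
  with assms have "count L x = 0 \<or> count L y = 0" by (auto simp: not_in_iff[symmetric])
  then show ?thesis using p by (auto simp: pair_weight_def)
qed

lemma pair_choice_le1:
  assumes "total_rate K L > 0"
  shows "emeasure (pair_choice K L) (space (pair_choice K L)) \<le> 1"
proof -
  have "emeasure (pair_choice K L) (space (pair_choice K L))
      = (\<integral>\<^sup>+p. ennreal (pair_weight K L p / total_rate K L) \<partial>count_space UNIV)"
    unfolding pair_choice_def by (simp add: emeasure_density)
  also have "\<dots> = (\<Sum>p\<in>set_mset L \<times> set_mset L. ennreal (pair_weight K L p / total_rate K L))"
    by (rule nn_integral_count_space') (auto simp: pair_weight_outside)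
  also have "\<dots> = ennreal (\<Sum>p\<in>set_mset L \<times> set_mset L. pair_weight K L p / total_rate K L)"
    using assms by (intro sum_ennreal) (simp add: pair_weight_nonneg)
  also have "(\<Sum>p\<in>set_mset L \<times> set_mset L. pair_weight K L p / total_rate K L) = 1"
    using assms by (simp add: sum_divide_distrib[symmetric] total_rate_def)
  finally show ?thesis by simp
qed

lemma AE_pair_choice:
  assumes "total_rate K L > 0" "\<And>p. pair_weight K L p > 0 \<Longrightarrow> P p"
  shows "AE p in pair_choice K L. P p"
  unfolding pair_choice_def
  using assms by (subst AE_density) (auto simp: AE_count_space divide_pos_pos
     intro!: assms(2) simp add: zero_less_divide_iff)

lemma merge_law_le1:
  assumes "Kbar K x y > 0" "emeasure (K x y) (space (K x y)) < \<infinity>"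
  shows "emeasure (merge_law K x y) (space (merge_law K x y)) \<le> 1"
proof -
  have "emeasure (K x y) (space (K x y)) = ennreal (Kbar K x y)"
    using assms(2) unfolding Kbar_def by (simp add: emeasure_eq_ennreal_measure)
  then have "emeasure (merge_law K x y) (space (merge_law K x y)) = ennreal (1 / Kbar K x y) * ennreal (Kbar K x y)"
    by (simp add: merge_law_def space_scale_measure)
  also have "\<dots> = 1" using assms(1) by (simp add: ennreal_mult'[symmetric])
  finally show ?thesis by simp
qed

lemma AE_merge_law:
  assumes "AE z in K x y. P z"
  shows "AE z in merge_law K x y. P z"
proof -
  obtain N0 where "N0 \<in> null_sets (K x y)" "{z\<in>space (K x y). \<not> P z} \<subseteq> N0"
    using assms unfolding eventually_ae_filter by auto
  then show ?thesis unfolding merge_law_def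
    by (intro AE_I[of _ _ N0]) (auto simp: space_scale_measure null_sets_def)
qed



lemma Str_merge:
  assumes "\<And>z. Str (F z)"
  shows "Str (Giry_Monad.bind (merge_law K x y) F)"
  by (rule Str_bind) (rule assms)

lemma Str_pair:
  assumes "\<And>x y. Str (G x y)"
  shows "Str (Giry_Monad.bind P (\<lambda>(x, y). G x y))"
  by (rule Str_bind) (simp add: assms split: prod.splits)

lemma Str_hit: "Str (hit_aux N K C n L)"
proof (induction n arbitrary: L)
  case 0
  then show ?case by (simp add: Str_def)
next
  case (Suc n)
  show ?case
  proof (cases "C L \<or> total_rate K L = 0")
    case True then show ?thesis by (auto simp: Str_def)
  next
    case False
    let ?R = "Giry_Monad.bind (pair_choice K L) (\<lambda>(x, y).
                  Giry_Monad.bind (merge_law K x y) (\<lambda>z. hit_aux N K C n (L - {#x, y#} + {#z#})))"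
    have SR: "Str ?R"
      by (rule Str_pair, rule Str_merge, rule Suc.IH)
    have "Str (Giry_Monad.bind (holding_law N K L) (\<lambda>\<tau>. Giry_Monad.bind ?R (\<lambda>t. return borel (ennreal \<tau> + t))))"
      by (rule Str_bind, rule Str_bind, simp add: Str_def)
    then show ?thesis using False by simp
  qed
qed



lemma hit_bound:
  fixes Inv :: "'a multiset \<Rightarrow> bool" and \<delta> :: real
  assumes KF: "\<And>L. Inv L \<Longrightarrow> \<not> C L \<Longrightarrow> \<delta> \<le> total_rate K L" and \<delta>: "0 < \<delta>"
    and step: "\<And>L x y. Inv L \<Longrightarrow> pair_weight K L (x, y) > 0 \<Longrightarrow>
          emeasure (K x y) (space (K x y)) < \<infinity> \<and> (AE z in K x y. Inv (L - {#x, y#} + {#z#}))"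
    and nonempty: "\<And>L. Inv L \<Longrightarrow> L \<noteq> {#}"
    and N: "0 < N"
  shows "Inv L \<Longrightarrow> size L = n \<Longrightarrow> Good (hit_aux N K C n L) (ennreal (real n * real N / \<delta>))"
proof (induction n arbitrary: L)
  case 0
  then show ?case using nonempty by auto
next
  case (Suc n)
  show ?case
  proof (cases "C L")
    case True then show ?thesis by (simp add: Good_def nn_integral_return)
  next
    case False
    have tr: "\<delta> \<le> total_rate K L" using KF[OF Suc.prems(1) False] .
    then have tr0: "total_rate K L > 0" using \<delta> by simp
    define B where "B = ennreal (real n * real N / \<delta>)"
    let ?h = "\<lambda>(x, y). Giry_Monad.bind (merge_law K x y) (\<lambda>z. hit_aux N K C n (L - {#x, y#} + {#z#}))"
    let ?R = "Giry_Monad.bind (pair_choice K L) ?h"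
    have GR: "Good ?R B"
    proof (rule Good_bind[OF pair_choice_le1[OF tr0]], rule AE_pair_choice[OF tr0])
      fix p assume pw: "pair_weight K L p > 0"
      obtain x y where p: "p = (x, y)" by force
      have sub: "{#x, y#} \<subseteq># L" and kb: "Kbar K x y > 0"
        using pair_weight_pos_D[of K L x y] pw p by auto
      have st: "emeasure (K x y) (space (K x y)) < \<infinity>" "AE z in K x y. Inv (L - {#x, y#} + {#z#})"
        using step[OF Suc.prems(1), of x y] pw p by auto
      have "2 \<le> size L" using size_mset_mono[OF sub] by simp
      then have sz: "size (L - {#x, y#} + {#z#}) = n" for z
        using sub Suc.prems(2) by (simp add: size_Diff_submset)
      have "Good (Giry_Monad.bind (merge_law K x y) (\<lambda>z. hit_aux N K C n (L - {#x, y#} + {#z#}))) B"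
        apply (rule Good_bind[OF merge_law_le1[OF kb st(1)]])
        apply (rule AE_merge_law)
        using st(2) apply eventually_elim
        using Suc.IH sz unfolding B_def by blast
      then show "Good (?h p) B" by (simp add: p)
    qed
    have SR: "Str ?R"
      by (rule Str_pair, rule Str_merge, rule Str_hit)
    have r: "0 < total_rate K L / real N" using tr0 N by simp
    have G: "Good (hit_aux N K C (Suc n) L) (ennreal (1 / (total_rate K L / real N)) + B)"
      using Good_outer[OF SR GR r] False tr0 by (simp add: holding_law_def)
    have "ennreal (1 / (total_rate K L / real N)) + B \<le> ennreal (real (Suc n) * real N / \<delta>)"
    proof -
      have "1 / (total_rate K L / real N) \<le> real N / \<delta>"
        using tr \<delta> N tr0 by (simp add: frac_le)
      then have "1 / (total_rate K L / real N) + real n * real N / \<delta> \<le> real (Suc n) * real N / \<delta>"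
        by (simp add: distrib_right add_divide_distrib)
      moreover have "0 \<le> 1 / (total_rate K L / real N)" "0 \<le> real n * real N / \<delta>"
        using tr0 N \<delta> by auto
      ultimately show ?thesis unfolding B_def
        by (simp add: ennreal_plus[symmetric] del: ennreal_plus)
    qed
    then show ?thesis using G unfolding Good_def by (auto intro: order_trans)
  qed
qed



lemma sum_mset_swap: "(\<Sum>x\<in>#L. \<Sum>a\<in>A. f x a) = (\<Sum>a\<in>A. \<Sum>x\<in>#L. f x a)"
  by (induction L) (simp_all add: sum.distrib)

lemma sum_mset_if_filter: "(\<Sum>x\<in>#L. if Q x then g x else (0::real)) = (\<Sum>x\<in>#filter_mset Q L. g x)"
  by (induction L) simp_all

lemma two_elems:
  assumes "2 \<le> size F"
  shows "\<exists>x y. {#x, y#} \<subseteq># F"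
proof -
  from assms have "F \<noteq> {#}" by auto
  then obtain x where "x \<in># F" by auto
  then obtain F' where F': "F = add_mset x F'" by (metis multi_member_split)
  with assms have "F' \<noteq> {#}" by auto
  then obtain y where "y \<in># F'" by auto
  then obtain F'' where "F' = add_mset y F''" by (metis multi_member_split)
  with F' have "{#x, y#} \<subseteq># F" by simp
  then show ?thesis by blast
qed

lemma band_exists:
  fixes v :: real
  shows "1 \<le> v \<Longrightarrow> v < 2 ^ i \<Longrightarrow> \<exists>j<i. 2 ^ j \<le> v \<and> v < 2 ^ (j + 1)"
proof (induction i)
  case 0 then show ?case by simp
next
  case (Suc i)
  show ?case
  proof (cases "v < 2 ^ i")
    case True then show ?thesis using Suc by (meson less_SucI)
  next
    case False then show ?thesis using Suc.prems by (intro exI[of _ i]) auto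
  qed
qed

lemma filter_size_le1_sum:
  assumes "size (filter_mset Q L) \<le> 1" "\<And>x. Q x \<Longrightarrow> g x \<le> b" "0 \<le> b"
  shows "(\<Sum>x\<in>#filter_mset Q L. g x) \<le> b"
proof (cases "filter_mset Q L = {#}")
  case True then show ?thesis using assms by (simp only: True) simp
next
  case False
  then obtain a where a: "a \<in># filter_mset Q L" by blast
  then obtain F' where F': "filter_mset Q L = add_mset a F'" by (metis multi_member_split)
  with assms(1) have "F' = {#}" by auto
  with F' have "filter_mset Q L = {#a#}" by simp
  moreover have "Q a" using a by simp
  ultimately show ?thesis using assms(2) by simp
qed



lemma core:
  fixes M :: "'a measure" and m :: "'a \<Rightarrow> real" and K :: "'a \<Rightarrow> 'a \<Rightarrow> 'a measure"
    and \<P> :: "nat \<Rightarrow> 'a set set" and L0 :: "'a multiset" and \<epsilon> :: real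
    and \<rho> :: "nat \<Rightarrow> real" and \<Psi> :: real and Xi :: nat and N k :: nat
  assumes m_pos: "\<And>x. x \<in> space M \<Longrightarrow> m x > 0"
    and K_sets: "\<And>x y. x \<in> space M \<Longrightarrow> y \<in> space M \<Longrightarrow> sets (K x y) = sets M"
    and K_sym: "\<And>x y. x \<in> space M \<Longrightarrow> y \<in> space M \<Longrightarrow> K x y = K y x"
    and K_fin: "\<And>x y. x \<in> space M \<Longrightarrow> y \<in> space M \<Longrightarrow> emeasure (K x y) (space M) < \<infinity>"
    and K_mass: "\<And>x y. x \<in> space M \<Longrightarrow> y \<in> space M \<Longrightarrow> AE z in K x y. m z = m x + m y"
    and A1_part: "\<And>j. is_partition (space M) (\<P> j)"
    and cardP: "\<And>j. j < k \<Longrightarrow> finite (\<P> j) \<and> card (\<P> j) \<le> Xi"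
    and A1_pos: "\<And>j P. P \<in> \<P> j \<Longrightarrow> c_prime K m P j > 0"
    and L0_space: "set_mset L0 \<subseteq> space M"
    and \<epsilon>_pos: "\<epsilon> > 0"
    and N: "0 < N"
    and I1: "pairing N (\<lambda>x. if m x \<ge> 1 then m x else 0) L0 > \<epsilon>"
    and \<rho>le: "\<And>i. \<rho> i \<le> \<rho> 0" and \<rho>0: "\<rho> 0 < 1"
    and pow: "2 ^ k \<le> \<Psi>"
    and small: "\<Psi> * real Xi / real N < (1 - \<rho> 0) * \<epsilon> / 2"
  shows "expected_hitting_time N K (stop_cond N m \<rho> L0 k) L0 < \<infinity>"
proof -
  define C where "C = stop_cond N m \<rho> L0 k"
  define \<phi> where "\<phi> = (\<lambda>x. if 1 \<le> m x then m x else 0)"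
  define \<Phi>0 where "\<Phi>0 = (\<Sum>x\<in>#L0. \<phi> x)"
  have pair0: "pairing N (\<lambda>x. if m x \<ge> 1 then m x else 0) L0 = \<Phi>0 / real N"
    by (simp add: pairing_def \<Phi>0_def \<phi>_def)
  have \<Phi>0_big: "real N * \<epsilon> < \<Phi>0"
    using I1 N unfolding pair0 by (simp add: field_simps)
  have \<Phi>0_pos: "0 < \<Phi>0" using \<Phi>0_big N \<epsilon>_pos
    by (metis less_trans mult_pos_pos of_nat_0_less_iff)
  define Inv where "Inv = (\<lambda>L. set_mset L \<subseteq> space M \<and> \<Phi>0 \<le> (\<Sum>x\<in>#L. \<phi> x))"
  define J where "J = (SIGMA j:{..<k}. \<P> j)"
  have finJ: "finite J" unfolding J_def using cardP by (intro finite_SigmaI) auto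
  define \<delta> where "\<delta> = Min (insert 1 ((\<lambda>(j, P). enn2real (min 1 (c_prime K m P j))) ` J))"
  have \<delta>_pos: "0 < \<delta>"
    unfolding \<delta>_def using finJ
  proof (subst Min_gr_iff, simp_all, intro ballI)
    fix p assume "p \<in> J"
    then obtain j P where p: "p = (j, P)" "P \<in> \<P> j" by (auto simp: J_def)
    have c: "0 < c_prime K m P j" using A1_pos[OF p(2)] .
    have "min 1 (c_prime K m P j) \<le> 1" by simp
    moreover have "(1::ennreal) < \<infinity>" by simp
    ultimately have lt: "min 1 (c_prime K m P j) < \<infinity>" by (rule le_less_trans)
    have "0 < min 1 (c_prime K m P j)" using c by simp
    note this lt
    then show "0 < (case p of (j, P) \<Rightarrow> enn2real (min 1 (c_prime K m P j)))"
      using p by (simp add: enn2real_positive_iff)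
  qed
  have \<delta>_le: "\<delta> \<le> enn2real (min 1 (c_prime K m P j))" if "j < k" "P \<in> \<P> j" for j P
  proof -
    have "(j, P) \<in> J" using that by (auto simp: J_def)
    then show ?thesis unfolding \<delta>_def using finJ by (intro Min_le) force+
  qed
  have nonneg_pw: "\<And>p. 0 \<le> pair_weight K L p" for L by (rule pair_weight_nonneg)
  have coll: "\<delta> \<le> total_rate K L"
    if inv: "Inv L" and jk: "j < k" and P: "P \<in> \<P> j"
      and sz: "2 \<le> size (filter_mset (\<lambda>x. x \<in> P \<and> 2 ^ j \<le> m x \<and> m x < 2 ^ (j + 1)) L)" for L j P
  proof -
    obtain x y where xy: "{#x, y#} \<subseteq># filter_mset (\<lambda>x. x \<in> P \<and> 2 ^ j \<le> m x \<and> m x < 2 ^ (j + 1)) L"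
      using two_elems[OF sz] by blast
    have xyL: "{#x, y#} \<subseteq># L" using xy multiset_filter_subset subset_mset.order_trans by blast
    have xin: "x \<in># filter_mset (\<lambda>x. x \<in> P \<and> 2 ^ j \<le> m x \<and> m x < 2 ^ (j + 1)) L"
      and yin: "y \<in># filter_mset (\<lambda>x. x \<in> P \<and> 2 ^ j \<le> m x \<and> m x < 2 ^ (j + 1)) L"
      using xy by (auto dest: mset_subset_eqD)
    then have xP: "x \<in> P" "2 ^ j \<le> m x" "m x < 2 ^ (j + 1)" "x \<in># L"
      and yP: "y \<in> P" "2 ^ j \<le> m y" "m y < 2 ^ (j + 1)" "y \<in># L" by auto
    have xM: "x \<in> space M" and yM: "y \<in> space M" using xP(4) yP(4) inv by (auto simp: Inv_def)
    have "c_prime K m P j \<le> ennreal (Kbar K x y)"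
      unfolding c_prime_def using xP yP by (intro Inf_lower) blast
    then have mle: "min 1 (c_prime K m P j) \<le> ennreal (Kbar K x y)" by (simp add: min.coboundedI2)
    have "enn2real (min 1 (c_prime K m P j)) \<le> Kbar K x y"
      using enn2real_mono[OF mle] Kbar_nonneg[of K x y] by simp
    with \<delta>_le[OF jk P] have dK: "\<delta> \<le> Kbar K x y" by linarith
    have fin: "finite (set_mset L \<times> set_mset L)" by simp
    have "Kbar K x y \<le> total_rate K L"
    proof (cases "x = y")
      case True
      have "2 \<le> count L x" using mset_subset_eq_count[OF xyL, of x] True by simp
      then have "count L x choose 2 \<noteq> 0" using binomial_eq_0_iff[of "count L x" 2] by simp
      then have "1 \<le> count L x choose 2" by linarith
      then have "1 \<le> real (count L x choose 2)" by simp
      then have "1 * Kbar K x x \<le> real (count L x choose 2) * Kbar K x x"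
        using Kbar_nonneg[of K x x] by (rule mult_right_mono)
      then have "Kbar K x y \<le> pair_weight K L (x, x)"
        using True by (simp add: pair_weight_def)
      also have "\<dots> \<le> total_rate K L"
        unfolding total_rate_def using xP(4) fin
        by (intro member_le_sum) (auto simp: pair_weight_nonneg)
      finally show ?thesis .
    next
      case False
      have cx: "1 \<le> count L x" and cy: "1 \<le> count L y" using xP(4) yP(4)
        by (simp_all add: Suc_le_eq)
      have "1 * 1 \<le> real (count L x) * real (count L y)"
        using cx cy by (intro mult_mono) auto
      then have "1 * Kbar K x y \<le> real (count L x) * real (count L y) * Kbar K x y"
        using Kbar_nonneg[of K x y] by (intro mult_right_mono) auto
      then have "Kbar K x y \<le> real (count L x) * real (count L y) * Kbar K x y" by simp
      also have "\<dots> = pair_weight K L (x, y) + pair_weight K L (y, x)"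
        using False K_sym[OF xM yM] by (simp add: pair_weight_def Kbar_def)
      also have "\<dots> = (\<Sum>p\<in>{(x, y), (y, x)}. pair_weight K L p)"
        using False by simp
      also have "\<dots> \<le> total_rate K L"
        unfolding total_rate_def using xP(4) yP(4) fin
        by (intro sum_mono2) (auto simp: pair_weight_nonneg)
      finally show ?thesis .
    qed
    with dK show ?thesis by linarith
  qed

  have geom: "(\<Sum>j<i. (2::real) ^ (j + 1)) = 2 ^ (i + 1) - 2" for i
    by (induction i) simp_all
  have "(1::real) \<le> 2 ^ k" by simp
  with pow have \<Psi>_pos: "1 \<le> \<Psi>" by linarith
  have C_if: "C L"
    if inv: "Inv L" and nc: "\<And>j P. j < k \<Longrightarrow> P \<in> \<P> j \<Longrightarrow>
         size (filter_mset (\<lambda>x. x \<in> P \<and> 2 ^ j \<le> m x \<and> m x < 2 ^ (j + 1)) L) \<le> 1" for L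
    unfolding C_def stop_cond_def
  proof (intro allI impI)
    fix i assume ik: "i \<le> k"
    define g where "g = (\<lambda>x. if m x \<ge> 2 ^ i then m x else (0::real))"
    define t where "t = (\<lambda>x. if 1 \<le> m x \<and> m x < 2 ^ i then m x else (0::real))"
    define q where "q = (\<lambda>j P x. if x \<in> P \<and> 2 ^ j \<le> m x \<and> m x < 2 ^ (j + 1) then m x else (0::real))"
    define S where "S = (\<Sum>x\<in>#L. g x)"
    define T where "T = (\<Sum>x\<in>#L. t x)"
    have finP: "\<And>j. j < i \<Longrightarrow> finite (\<P> j)" using cardP ik by auto
    have "(\<Sum>x\<in>#L. \<phi> x) = (\<Sum>x\<in>#L. g x + t x)"
    proof (rule arg_cong[where f = sum_mset], rule image_mset_cong)
      fix x
      have h: "(1::real) \<le> 2 ^ i" by simp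
      show "\<phi> x = g x + t x" unfolding \<phi>_def g_def t_def using h by (smt (verit))
    qed
    also have "\<dots> = S + T" unfolding S_def T_def by (rule sum_mset.distrib)
    finally have \<Phi>L: "(\<Sum>x\<in>#L. \<phi> x) = S + T" .
    have q_nonneg: "0 \<le> q j P x" for j P x
      unfolding q_def using zero_le_power[of 2 j] by auto
    have "T \<le> (\<Sum>x\<in>#L. \<Sum>j<i. \<Sum>P\<in>\<P> j. q j P x)"
      unfolding T_def
    proof (rule sum_mset_mono)
      fix x assume "x \<in># L"
      then have xM: "x \<in> space M" using inv by (auto simp: Inv_def)
      show "t x \<le> (\<Sum>j<i. \<Sum>P\<in>\<P> j. q j P x)"
      proof (cases "1 \<le> m x \<and> m x < 2 ^ i")
        case False
        then have "t x = 0" by (simp add: t_def)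
        then show ?thesis by (simp add: sum_nonneg q_nonneg)
      next
        case True
        then obtain j where j: "j < i" "2 ^ j \<le> m x" "m x < 2 ^ (j + 1)"
          using band_exists by blast
        have "x \<in> \<Union>(\<P> j)" using A1_part[of j] xM by (simp add: is_partition_def)
        then obtain P where P: "P \<in> \<P> j" "x \<in> P" by blast
        have "t x = q j P x" using True j P by (simp add: t_def q_def)
        also have "\<dots> \<le> (\<Sum>P\<in>\<P> j. q j P x)"
          using P finP[OF j(1)] by (intro member_le_sum) (auto simp: q_nonneg)
        also have "\<dots> \<le> (\<Sum>j<i. \<Sum>P\<in>\<P> j. q j P x)"
          using j(1) by (intro member_le_sum[where f = "\<lambda>j. \<Sum>P\<in>\<P> j. q j P x"]) (auto simp: sum_nonneg q_nonneg)
        finally show ?thesis .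
      qed
    qed
    also have "\<dots> = (\<Sum>j<i. \<Sum>P\<in>\<P> j. \<Sum>x\<in>#L. q j P x)"
      by (simp add: sum_mset_swap)
    also have "\<dots> \<le> (\<Sum>j<i. \<Sum>P\<in>\<P> j. (2::real) ^ (j + 1))"
    proof (intro sum_mono)
      fix j P assume j: "j \<in> {..<i}" and P: "P \<in> \<P> j"
      have "(\<Sum>x\<in>#L. q j P x) = (\<Sum>x\<in>#filter_mset (\<lambda>x. x \<in> P \<and> 2 ^ j \<le> m x \<and> m x < 2 ^ (j + 1)) L. m x)"
        unfolding q_def by (rule sum_mset_if_filter)
      also have "\<dots> \<le> 2 ^ (j + 1)"
        using nc[of j P] j P ik by (intro filter_size_le1_sum) auto
      finally show "(\<Sum>x\<in>#L. q j P x) \<le> 2 ^ (j + 1)" .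
    qed
    also have "\<dots> = (\<Sum>j<i. real (card (\<P> j)) * 2 ^ (j + 1))" by simp
    also have "\<dots> \<le> (\<Sum>j<i. real Xi * 2 ^ (j + 1))"
      using cardP ik by (intro sum_mono mult_right_mono) auto
    also have "\<dots> = real Xi * (\<Sum>j<i. (2::real) ^ (j + 1))" by (rule sum_distrib_left[symmetric])
    also have "\<dots> = real Xi * (2 ^ (i + 1) - 2)" by (simp only: geom)
    also have "\<dots> \<le> real Xi * (2 * 2 ^ i)" by (intro mult_left_mono) auto
    also have "\<dots> \<le> real Xi * (2 * \<Psi>)"
    proof -
      have "(2::real) ^ i \<le> 2 ^ k" using ik by (intro power_increasing) auto
      then have "(2::real) ^ i \<le> \<Psi>" using pow by linarith
      then show ?thesis by (intro mult_left_mono) auto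
    qed
    finally have Tle: "T \<le> 2 * (\<Psi> * real Xi)" by (simp add: algebra_simps)
    have "2 * (\<Psi> * real Xi) < (1 - \<rho> 0) * \<epsilon> * real N"
      using small N by (simp add: field_simps)
    also have "\<dots> \<le> (1 - \<rho> 0) * \<Phi>0"
    proof -
      have e: "\<epsilon> * real N \<le> \<Phi>0" using \<Phi>0_big by (simp add: mult.commute)
      have "(1 - \<rho> 0) * (\<epsilon> * real N) \<le> (1 - \<rho> 0) * \<Phi>0"
        by (rule mult_left_mono[OF e]) (use \<rho>0 in simp)
      then show ?thesis by (simp add: mult.assoc)
    qed
    also have "\<dots> \<le> (1 - \<rho> i) * \<Phi>0"
      using \<rho>le[of i] \<Phi>0_pos by (intro mult_right_mono) auto
    finally have "T < (1 - \<rho> i) * \<Phi>0" using Tle by linarith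
    moreover have "\<Phi>0 \<le> S + T" using inv \<Phi>L by (simp add: Inv_def)
    ultimately have "\<rho> i * \<Phi>0 \<le> S" by (simp add: algebra_simps)
    then have "\<rho> i \<le> S / \<Phi>0" using \<Phi>0_pos by (simp add: pos_le_divide_eq)
    moreover have "pairing N (\<lambda>x. if m x \<ge> 2 ^ i then m x else 0) L / pairing N (\<lambda>x. if m x \<ge> 1 then m x else 0) L0 = S / \<Phi>0"
      unfolding pair0 using N by (simp add: pairing_def S_def g_def)
    ultimately show "\<rho> i \<le> pairing N (\<lambda>x. if m x \<ge> 2 ^ i then m x else 0) L / pairing N (\<lambda>x. if m x \<ge> 1 then m x else 0) L0"
      by simp
  qed

  have KF: "\<delta> \<le> total_rate K L" if inv: "Inv L" and nC: "\<not> C L" for L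
  proof (rule ccontr)
    assume lt: "\<not> \<delta> \<le> total_rate K L"
    have "size (filter_mset (\<lambda>x. x \<in> P \<and> 2 ^ j \<le> m x \<and> m x < 2 ^ (j + 1)) L) \<le> 1"
      if "j < k" "P \<in> \<P> j" for j P
    proof (rule ccontr)
      assume "\<not> size (filter_mset (\<lambda>x. x \<in> P \<and> 2 ^ j \<le> m x \<and> m x < 2 ^ (j + 1)) L) \<le> 1"
      then have "2 \<le> size (filter_mset (\<lambda>x. x \<in> P \<and> 2 ^ j \<le> m x \<and> m x < 2 ^ (j + 1)) L)" by simp
      from coll[OF inv that this] lt show False by simp
    qed
    then have "C L" by (rule C_if[OF inv])
    with nC show False by simp
  qed
  have step: "emeasure (K x y) (space (K x y)) < \<infinity> \<and> (AE z in K x y. Inv (L - {#x, y#} + {#z#}))"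
    if inv: "Inv L" and pw: "pair_weight K L (x, y) > 0" for L x y
  proof -
    have sub: "{#x, y#} \<subseteq># L" using pair_weight_pos_D(1)[OF pw] .
    then have "x \<in># L" "y \<in># L" by (auto dest: mset_subset_eqD)
    then have xM: "x \<in> space M" and yM: "y \<in> space M" using inv by (auto simp: Inv_def)
    have spK: "space (K x y) = space M" by (rule sets_eq_imp_space_eq[OF K_sets[OF xM yM]])
    have fin: "emeasure (K x y) (space (K x y)) < \<infinity>" using K_fin[OF xM yM] spK by simp
    have decomp: "L - {#x, y#} + {#x, y#} = L" using sub by (rule subset_mset.diff_add)
    have "AE z in K x y. Inv (L - {#x, y#} + {#z#})"
      using K_mass[OF xM yM] AE_space
    proof eventually_elim
      case (elim z)
      then have zM: "z \<in> space M" and mz: "m z = m x + m y" using spK by auto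
      have "set_mset (L - {#x, y#} + {#z#}) \<subseteq> space M"
        using inv zM by (auto simp: Inv_def dest: in_diffD)
      moreover
      have "(\<Sum>x\<in>#L. \<phi> x) = (\<Sum>x\<in>#L - {#x, y#}. \<phi> x) + \<phi> x + \<phi> y"
        by (subst (1) decomp[symmetric]) simp
      moreover have "\<phi> x + \<phi> y \<le> \<phi> z"
        unfolding \<phi>_def mz using m_pos[OF xM] m_pos[OF yM] by (smt (verit))
      ultimately show ?case using inv unfolding Inv_def by simp
    qed
    with fin show ?thesis by simp
  qed
  have nonempty: "L \<noteq> {#}" if "Inv L" for L
    using that \<Phi>0_pos by (auto simp: Inv_def)
  have init: "Inv L0" using L0_space by (simp add: Inv_def \<Phi>0_def)
  have G: "Good (hit_aux N K C (size L0) L0) (ennreal (real (size L0) * real N / \<delta>))"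
    by (rule hit_bound[where Inv = Inv and \<delta> = \<delta>, OF KF \<delta>_pos step nonempty N init refl])
  have S: "Str (hit_aux N K C (size L0) L0)" by (rule Str_hit)
  show ?thesis
    unfolding C_def[symmetric] expected_hitting_time_def hit_law_def
  proof (cases "space (hit_aux N K C (size L0) L0) = {}")
    case True then show "(\<integral>\<^sup>+t. t \<partial>hit_aux N K C (size L0) L0) < \<infinity>"
      by (simp add: nn_integral_empty)
  next
    case False
    with S have "sets (hit_aux N K C (size L0) L0) = sets (borel::ennreal measure)" by (simp add: Str_def)
    with G have "(\<integral>\<^sup>+t. t \<partial>hit_aux N K C (size L0) L0) \<le> ennreal (real (size L0) * real N / \<delta>)"
      by (simp add: Good_def)
    also have "\<dots> < \<infinity>" by simp
    finally show "(\<integral>\<^sup>+t. t \<partial>hit_aux N K C (size L0) L0) < \<infinity>" .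
  qed
qed


theorem lemma4p1:
  fixes M :: "'a measure" and m :: "'a \<Rightarrow> real" and K :: "'a \<Rightarrow> 'a \<Rightarrow> 'a measure"
    and \<xi> :: "nat \<Rightarrow> nat" and \<psi> :: "nat \<Rightarrow> real"
    and \<P> :: "nat \<Rightarrow> 'a set set" and f :: "nat \<Rightarrow> real"
    and L0 :: "nat \<Rightarrow> 'a multiset" and \<epsilon> :: real
    and \<rho> :: "nat \<Rightarrow> real" and \<rho>lim :: real and c :: real
  assumes m_meas: "m \<in> borel_measurable M"
    and m_pos: "\<And>x. x \<in> space M \<Longrightarrow> m x > 0"
    and K_sets: "\<And>x y. x \<in> space M \<Longrightarrow> y \<in> space M \<Longrightarrow> sets (K x y) = sets M"
    and K_meas: "\<And>B. B \<in> sets M \<Longrightarrow> (\<lambda>(x, y). emeasure (K x y) B) \<in> borel_measurable (M \<Otimes>\<^sub>M M)"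
    and K_sym: "\<And>x y. x \<in> space M \<Longrightarrow> y \<in> space M \<Longrightarrow> K x y = K y x"
    and K_fin: "\<And>x y. x \<in> space M \<Longrightarrow> y \<in> space M \<Longrightarrow> emeasure (K x y) (space M) < \<infinity>"
    and K_mass: "\<And>x y. x \<in> space M \<Longrightarrow> y \<in> space M \<Longrightarrow> AE z in K x y. m z = m x + m y"
    and \<psi>_mono: "mono \<psi>" and \<psi>_lim: "filterlim \<psi> at_top sequentially"
    (* (A1) *)
    and A1_part: "\<And>j. is_partition (space M) (\<P> j)"
    and A1_card: "\<And>N j. real j \<le> log 2 (\<psi> N) \<Longrightarrow> finite (\<P> j) \<and> card (\<P> j) \<le> \<xi> N"
    and A1_pos: "\<And>j P. P \<in> \<P> j \<Longrightarrow> c_prime K m P j > 0"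
    (* (A2) *)
    and f_pos: "\<And>j. f j > 0" and f_decr: "\<And>i j. i < j \<Longrightarrow> f j < f i" and f_summable: "summable f"
    and A2: "limsup (\<lambda>N. \<Sum>j\<in>{j. real j \<le> log 2 (\<psi> N)}.
               ennreal (2 ^ j / (f j)\<^sup>2) * (\<Sum>P\<in>\<P> j. inverse (c_prime K m P j))) < \<infinity>"
    (* (A3) *)
    and A3: "(\<lambda>N. \<psi> N * real (\<xi> N) / real N) \<longlonglongrightarrow> 0"
    (* initial conditions pi^(N) = L0 N / N, and (I1), (I2) *)
    and L0_space: "\<And>N. set_mset (L0 N) \<subseteq> space M"
    and \<epsilon>_pos: "\<epsilon> > 0"
    and I1: "\<And>N. N > 0 \<Longrightarrow> pairing N (\<lambda>x. if m x \<ge> 1 then m x else 0) (L0 N) > \<epsilon>"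
    and I2: "\<And>N. \<exists>g::real. always_visited K
               (\<lambda>L. (\<Sum>x\<in>#L. \<Sum>y\<in>#L. Kbar K x y * m x) / (real N)\<^sup>2 \<le> g) (L0 N)"
    (* the thresholds rho_k *)
    and \<rho>_range: "\<And>k. 0 < \<rho> k \<and> \<rho> k < 1"
    and \<rho>_decr: "\<And>i j. i < j \<Longrightarrow> \<rho> j < \<rho> i"
    and \<rho>_lim: "\<rho> \<longlonglongrightarrow> \<rho>lim" and \<rho>lim_pos: "\<rho>lim > 0"
    and c_pos: "c > 0" and \<rho>_step: "\<And>k. \<rho> k - \<rho> (Suc k) = c * f k"
  shows "\<exists>N0. \<forall>N\<ge>N0. \<forall>k. real k \<le> log 2 (\<psi> N) \<longrightarrow>
           expected_hitting_time N K (stop_cond N m \<rho> (L0 N) k) (L0 N) < \<infinity>"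
  proof -
  have \<rho>0: "\<rho> 0 < 1" using \<rho>_range[of 0] by simp
  have \<rho>le: "\<rho> i \<le> \<rho> 0" for i
  proof (cases "i = 0")
    case False then show ?thesis using \<rho>_decr[of 0 i] by simp
  qed simp
  define \<eta> where "\<eta> = (1 - \<rho> 0) * \<epsilon> / 2"
  have \<eta>_pos: "0 < \<eta>" using \<rho>0 \<epsilon>_pos by (simp add: \<eta>_def)
  have e1: "eventually (\<lambda>N. 1 \<le> \<psi> N) sequentially"
    using \<psi>_lim unfolding filterlim_at_top by blast
  have e2: "eventually (\<lambda>N. \<psi> N * real (\<xi> N) / real N < \<eta>) sequentially"
    using order_tendstoD(2)[OF A3 \<eta>_pos] by simp
  have e3: "eventually (\<lambda>N::nat. 0 < N) sequentially"
    by (rule eventually_gt_at_top)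
  obtain N0 where N0: "\<And>N. N \<ge> N0 \<Longrightarrow> 1 \<le> \<psi> N \<and> \<psi> N * real (\<xi> N) / real N < \<eta> \<and> 0 < N"
    using eventually_conj[OF e1 eventually_conj[OF e2 e3]] unfolding eventually_sequentially by blast
  show ?thesis
  proof (intro exI allI impI)
    fix N k assume NN: "N0 \<le> N" and kl: "real k \<le> log 2 (\<psi> N)"
    have \<psi>1: "1 \<le> \<psi> N" and small: "\<psi> N * real (\<xi> N) / real N < (1 - \<rho> 0) * \<epsilon> / 2"
      and N: "0 < N" using N0[OF NN] by (auto simp: \<eta>_def)
    have "2 powr real k \<le> \<psi> N" using kl le_log_iff[of 2 "\<psi> N" "real k"] \<psi>1 by simp
    then have pow: "2 ^ k \<le> \<psi> N" by (simp add: powr_realpow)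
    have cardP: "finite (\<P> j) \<and> card (\<P> j) \<le> \<xi> N" if "j < k" for j
      using A1_card[of j N] that kl by simp
    show "expected_hitting_time N K (stop_cond N m \<rho> (L0 N) k) (L0 N) < \<infinity>"
      by (rule core[where M=M and m=m and K=K and \<P>=\<P> and \<epsilon>=\<epsilon> and \<rho>=\<rho> and \<Psi>="\<psi> N" and Xi="\<xi> N" and N=N and k=k, OF m_pos K_sets K_sym K_fin K_mass A1_part cardP A1_pos L0_space[of N] \<epsilon>_pos N I1[OF N]
            \<rho>le \<rho>0 pow small])
  qed
qed

end
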